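(* Let $a,c,p\in\mathbb{C}$ with $-c\notin\mathbb{N}\cup\{0\}$ and $c\neq2$. Write $\cosh(pz)M(a,c;z)=\sum_{n=0}^\infty u_nz^n$, $z\in\mathbb{C}$. Then $u_0=1$, $u_1=\frac ac$, $u_2=\frac{a(a+1)}{2c(c+1)}+\frac{p^2}{2}$, $u_3=\frac{ap^2}{2c}+\frac{a(a+1)(a+2)}{6c(c+1)(c+2)}$, $u_4=\frac{a(a+1)p^2}{4c(c+1)}+\frac{a(a+1)(a+2)(a+3)}{24c(c+1)(c+2)(c+3)}+\frac{p^4}{24}$, $u_5=\frac{ap^4}{24c}+\frac{a(a+1)(a+2)p^2}{12c(c+1)(c+2)}+\frac{a(a+1)(a+2)(a+3)(a+4)}{120c(c+1)(c+2)(c+3)(c+4)}$, and for all integers $n\ge5$, \[ u_{n+1}=\sum_{i=0}^5\beta_i(n)u_{n-i}, \] where, with $D(n)=(c-2)c\,n(n+1)(c+n-1)(c+n)$, \[ \beta_0(n)=\frac{2\left(a\left(c^2-2cn+c-2(n-2)^2\right)+c(n-1)(2c+n-5)\right)}{(c-2)c(n+1)(c+n)}, \] \[ \beta_1(n)=\frac{1}{D(n)}\Big[(n-4)(n-3)(n-2)(n-1)(4p^2-1)+2(n-3)(n-2)(n-1)\big(4a+c(4p^2-3)\big) +(n-2)(n-1)\big(8a^2+a(4c+6)+c(6(c-2)p^2-6c+1)\big) +2(n-1)\big(a^2(4c-2)-3a(c-1)c+(c-2)c(c+1)p^2\big) +(c-2)\big(-a^2(c+2)+ac+c^2(c+1)p^2\big)\Big],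 \] \[ \beta_2(n)=\frac{1}{D(n)}\Big[2p^2(c-3)\big(a(3c+8)-2c^2+c-32\big)+2p^2\big(n(10a+c(31-3c)-104)-6(c-6)n^2-4n^3\big) -2(a+n-3)\big(2a^2-a(c-2n+3)-(n-2)(2c+n-4)\big)\Big], \] \[ \beta_3(n)=-\frac{1}{D(n)}\Big[p^2\big(-12a^2+2a(6c+5)-6c^2+c\big)+2(n-3)\big(a+c(4p^2-3)p^2\big) +(a-1)a+5(c-2)cp^4+(n-4)(n-3)(8p^4-6p^2+1)\Big], \] \[ \beta_4(n)=\frac{2p^2\left(p^2(-6a+5c+4(n-4))+3a-2c-n+4\right)}{D(n)},\qquad \beta_5(n)=\frac{4p^6-5p^4+p^2}{D(n)}. \]
   Context: For $a\in\mathbb{C}$, $(a)_n=a(a+1)\cdots(a+n-1)$ denotes the Pochhammer symbol, with $(a)_0=1$. For $a,c\in\mathbb{C}$ with $-c\notin\mathbb{N}\cup\{0\}$, the confluent hypergeometric (Kummer) function is $M(a,c;z)=\sum_{n=0}^\infty \frac{(a)_n}{(c)_n\,n!}z^n$, $z\in\mathbb{C}$. *)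

theory Defs
  imports "HOL-Analysis.Analysis"
begin

definition kummerM :: "complex \<Rightarrow> complex \<Rightarrow> complex \<Rightarrow> complex" where
  "kummerM a c z = (\<Sum>n. pochhammer a n / (pochhammer c n * fact n) * z ^ n)"

definition Dn :: "complex \<Rightarrow> nat \<Rightarrow> complex" where
  "Dn c n = (c - 2) * c * of_nat n * (of_nat n + 1) * (c + of_nat n - 1) * (c + of_nat n)"

definition beta0 :: "complex \<Rightarrow> complex \<Rightarrow> nat \<Rightarrow> complex" where
  "beta0 a c n = (let m = (of_nat n :: complex) in
     2 * (a * (c^2 - 2*c*m + c - 2*(m - 2)^2) + c*(m - 1)*(2*c + m - 5))
     / ((c - 2) * c * (m + 1) * (c + m)))"

definition beta1 :: "complex \<Rightarrow> complex \<Rightarrow> complex \<Rightarrow> nat \<Rightarrow> complex" where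
  "beta1 a c p n = (let m = (of_nat n :: complex) in
     ((m - 4)*(m - 3)*(m - 2)*(m - 1)*(4*p^2 - 1)
      + 2*(m - 3)*(m - 2)*(m - 1)*(4*a + c*(4*p^2 - 3))
      + (m - 2)*(m - 1)*(8*a^2 + a*(4*c + 6) + c*(6*(c - 2)*p^2 - 6*c + 1))
      + 2*(m - 1)*(a^2*(4*c - 2) - 3*a*(c - 1)*c + (c - 2)*c*(c + 1)*p^2)
      + (c - 2)*(- (a^2*(c + 2)) + a*c + c^2*(c + 1)*p^2)) / Dn c n)"

definition beta2 :: "complex \<Rightarrow> complex \<Rightarrow> complex \<Rightarrow> nat \<Rightarrow> complex" where
  "beta2 a c p n = (let m = (of_nat n :: complex) in
     (2*p^2*(c - 3)*(a*(3*c + 8) - 2*c^2 + c - 32)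
      + 2*p^2*(m*(10*a + c*(31 - 3*c) - 104) - 6*(c - 6)*m^2 - 4*m^3)
      - 2*(a + m - 3)*(2*a^2 - a*(c - 2*m + 3) - (m - 2)*(2*c + m - 4))) / Dn c n)"

definition beta3 :: "complex \<Rightarrow> complex \<Rightarrow> complex \<Rightarrow> nat \<Rightarrow> complex" where
  "beta3 a c p n = (let m = (of_nat n :: complex) in
     - ((p^2*(-12*a^2 + 2*a*(6*c + 5) - 6*c^2 + c)
        + 2*(m - 3)*(a + c*(4*p^2 - 3)*p^2)
        + (a - 1)*a + 5*(c - 2)*c*p^4
        + (m - 4)*(m - 3)*(8*p^4 - 6*p^2 + 1)) / Dn c n))"

definition beta4 :: "complex \<Rightarrow> complex \<Rightarrow> complex \<Rightarrow> nat \<Rightarrow> complex" where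
  "beta4 a c p n = (let m = (of_nat n :: complex) in
     2*p^2*(p^2*(-6*a + 5*c + 4*(m - 4)) + 3*a - 2*c - m + 4) / Dn c n)"

definition beta5 :: "complex \<Rightarrow> complex \<Rightarrow> nat \<Rightarrow> complex" where
  "beta5 c p n = (4*p^6 - 5*p^4 + p^2) / Dn c n"

end

theory Submission
  imports Defs "HOL-Computational_Algebra.Formal_Power_Series" "HOL-Complex_Analysis.Complex_Analysis"
begin

definition mc :: "complex \<Rightarrow> complex \<Rightarrow> nat \<Rightarrow> complex" where
  "mc a c j = pochhammer a j / (pochhammer c j * fact j)"

definition gs :: "complex \<Rightarrow> complex \<Rightarrow> complex \<Rightarrow> nat \<Rightarrow> complex" where
  "gs a c s n = (\<Sum>i=0..n. s^i / fact i * mc a c (n-i))"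

lemma mc_Suc:
  assumes hc: "\<forall>k::nat. c \<noteq> - of_nat k"
  shows "(of_nat j + 1) * (of_nat j + c) * mc a c (Suc j) = (a + of_nat j) * mc a c j"
proof -
  have p: "pochhammer c j \<noteq> 0" using hc by (auto simp: pochhammer_eq_0_iff)
  have q: "c + of_nat j \<noteq> 0" using hc by (metis add.commute add_eq_0_iff2)
  have f: "(fact j :: complex) \<noteq> 0" by simp
  have r: "(of_nat j + 1 :: complex) \<noteq> 0" by (metis of_nat_Suc of_nat_eq_0_iff nat.distinct(1) add.commute)
  have "mc a c (Suc j) = pochhammer a j * (a + of_nat j) / (pochhammer c j * (c + of_nat j) * ((of_nat j + 1) * fact j))"
    by (simp add: mc_def pochhammer_Suc fact_Suc of_nat_Suc add.commute)
  moreover have q': "of_nat j + c \<noteq> 0" using q by (simp add: add.commute)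
  ultimately show ?thesis using p q f r
    by (simp add: mc_def add.commute mult.commute mult.left_commute)
qed

lemma ode_M:
  assumes hc: "\<forall>k::nat. c \<noteq> - of_nat k"
  shows "fps_X * fps_deriv (fps_deriv (Abs_fps (mc a c))) + (fps_const c - fps_X) * fps_deriv (Abs_fps (mc a c))
         - fps_const a * Abs_fps (mc a c) = 0"
proof (rule fps_ext)
  fix n
  show "fps_nth (fps_X * fps_deriv (fps_deriv (Abs_fps (mc a c))) + (fps_const c - fps_X) * fps_deriv (Abs_fps (mc a c))
         - fps_const a * Abs_fps (mc a c)) n = fps_nth 0 n"
  proof (cases n)
    case 0
    then show ?thesis using mc_Suc[OF hc, of 0 a] by (simp add: algebra_simps)
  next
    case (Suc k)
    have e: "(of_nat (Suc k) + 1) * (of_nat (Suc k) + c) * mc a c (Suc (Suc k)) = (a + of_nat (Suc k)) * mc a c (Suc k)"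
      by (rule mc_Suc[OF hc])
    show ?thesis using e unfolding Suc by (simp add: algebra_simps fps_mult_nth_1' del: fps_mult_nth_1')
  qed
qed

lemma ode_G:
  fixes a c w :: complex
  assumes hc: "\<forall>k::nat. c \<noteq> - of_nat k"
  defines "G \<equiv> fps_exp w * Abs_fps (mc a c)"
  shows "fps_X * fps_deriv (fps_deriv G) + (fps_const c - fps_const (2*w+1) * fps_X) * fps_deriv G
         + (fps_const (w^2+w) * fps_X - fps_const (c*w+a)) * G = 0"
proof -
  define F where "F = Abs_fps (mc a c)"
  define E where "E = fps_exp w"
  have dE: "fps_deriv E = fps_const w * E" by (simp add: E_def)
  have G: "G = E * F" by (simp add: G_def E_def F_def)
  have M: "fps_X * fps_deriv (fps_deriv F) + (fps_const c - fps_X) * fps_deriv F - fps_const a * F = 0"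
    unfolding F_def by (rule ode_M[OF hc])
  have "fps_X * fps_deriv (fps_deriv G) + (fps_const c - fps_const (2*w+1) * fps_X) * fps_deriv G
         + (fps_const (w^2+w) * fps_X - fps_const (c*w+a)) * G
       = E * (fps_X * fps_deriv (fps_deriv F) + (fps_const c - fps_X) * fps_deriv F - fps_const a * F)"
    unfolding G by (simp add: dE algebra_simps power2_eq_square flip: fps_const_mult fps_const_add fps_numeral_fps_const)
  then show ?thesis using M by simp
qed

lemma core_id:
  fixes N a c w za zb zc zd ze zf zg :: complex
  shows "(c-2)*c*N*(N+1)*(c+N-1)*(c+N) * zg - (2*(a*(c^2 - 2*c*N + c - 2*(N - 2)^2) + c*(N - 1)*(2*c + N - 5))*N*(c+N-1)*zf + ((N - 4)*(N - 3)*(N - 2)*(N - 1)*(4*w^2 - 1) + 2*(N - 3)*(N - 2)*(N - 1)*(4*a + c*(4*w^2 - 3)) + (N - 2)*(N - 1)*(8*a^2 + a*(4*c + 6) + c*(6*(c - 2)*w^2 - 6*c + 1)) + 2*(N - 1)*(a^2*(4*c - 2) - 3*a*(c - 1)*c + (c - 2)*c*(c + 1)*w^2) + (c - 2)*(- (a^2*(c + 2)) + a*c + c^2*(c + 1)*w^2))*ze + (2*w^2*(c - 3)*(a*(3*c + 8) - 2*c^2 + c - 32) + 2*w^2*(N*(10*a + c*(31 - 3*c) - 104) - 6*(c - 6)*N^2 - 4*N^3) - 2*(a + N - 3)*(2*a^2 - a*(c - 2*N + 3) - (N - 2)*(2*c + N - 4)))*zd + (- ((w^2*(-12*a^2 +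 2*a*(6*c + 5) - 6*c^2 + c) + 2*(N - 3)*(a + c*(4*w^2 - 3)*w^2) + (a - 1)*a + 5*(c - 2)*c*w^4 + (N - 4)*(N - 3)*(8*w^4 - 6*w^2 + 1))))*zc + (2*w^2*(w^2*(-6*a + 5*c + 4*(N - 4)) + 3*a - 2*c - N + 4))*zb + (4*w^6 - 5*w^4 + w^2)*za)
  = (2*N*c - 3*N*c^2 + N*c^3 - 2*N^2*c + N^2*c^2)*((N+1)*(N+c)*zg - ((2*w+1)*N + c*w + a)*zf + w*(w+1)*ze)
  + (- 10*c + 4*c^2 - 2*c^2*w + c^3*w + 16*a - 4*a*c - a*c^2 + 10*N*c - 4*N*c*w - 3*N*c^2 + 2*N*c^2*w - 16*N*a + 4*N*a*c - 2*N^2*c + 4*N^2*a)*(((N-1)+1)*((N-1)+c)*zf - ((2*w+1)*(N-1) + c*w + a)*ze + w*(w+1)*zd)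
  + (12 - 48*w^2 - 8*c + 10*c*w + 10*c*w^2 - 3*c^2*w + c^2*w^2 + 10*a - 16*a*w + 2*a*c + 4*a*c*w - 4*a^2 - 7*N + 28*N*w^2 + 3*N*c - 4*N*c*w - 4*N*c*w^2 - 4*N*a + 8*N*a*w + N^2 - 4*N^2*w^2)*(((N-2)+1)*((N-2)+c)*ze - ((2*w+1)*(N-2) + c*w + a)*zd + w*(w+1)*zc)
  + (4 - 8*w - 16*w^2 + 32*w^3 + 3*c*w - 2*c*w^2 - 4*c*w^3 - a - 4*a*w + 8*a*w^2 - N + 2*N*w + 4*N*w^2 - 8*N*w^3)*(((N-3)+1)*((N-3)+c)*zd - ((2*w+1)*(N-3) + c*w + a)*zc + w*(w+1)*zb)
  + (- w + w^2 + 4*w^3 - 4*w^4)*(((N-4)+1)*((N-4)+c)*zc - ((2*w+1)*(N-4) + c*w + a)*zb + w*(w+1)*za)"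
  by algebra

lemma gs_nth: "gs a c w n = fps_nth (fps_exp w * Abs_fps (mc a c)) n"
  by (simp add: gs_def fps_mult_nth)

lemma rec_g:
  fixes a c w :: complex
  assumes hc: "\<forall>k::nat. c \<noteq> - of_nat k"
  shows "(of_nat k + 2)*(of_nat k + 1 + c)*gs a c w (k+2) = ((2*w+1)*(of_nat k+1) + c*w + a)*gs a c w (k+1) - w*(w+1)*gs a c w k"
proof -
  define G where "G = fps_exp w * Abs_fps (mc a c)"
  have "fps_nth (fps_X * fps_deriv (fps_deriv G) + (fps_const c - fps_const (2*w+1) * fps_X) * fps_deriv G
         + (fps_const (w^2+w) * fps_X - fps_const (c*w+a)) * G) (Suc k) = 0"
    unfolding G_def by (subst ode_G[OF hc]) simp
  then have "(of_nat k + 1)*(of_nat k + 2) * fps_nth G (k+2) + c*(of_nat k + 2)*fps_nth G (k+2)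
      - (2*w+1)*(of_nat k+1)*fps_nth G (k+1) + (w^2+w)*fps_nth G k - (c*w+a)*fps_nth G (k+1) = 0"
    by (simp add: algebra_simps of_nat_Suc numeral_2_eq_2 del: fps_mult_nth_1')
  then show ?thesis unfolding gs_nth G_def[symmetric] by (simp add: algebra_simps power2_eq_square)
qed
lemma rec6:
  fixes a c w :: complex and x :: "nat \<Rightarrow> complex"
  assumes R: "\<And>k. (of_nat k + 2)*(of_nat k + 1 + c)*x(k+2) = ((2*w+1)*(of_nat k+1) + c*w + a)*x(k+1) - w*(w+1)*x k"
    and hc: "\<forall>k::nat. c \<noteq> - of_nat k" and hc2: "c \<noteq> 2" and n: "n \<ge> 5"
  shows "x (n+1) = beta0 a c n * x n + beta1 a c w n * x (n-1) + beta2 a c w n * x (n-2)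
                       + beta3 a c w n * x (n-3) + beta4 a c w n * x (n-4) + beta5 c w n * x (n-5)"
proof -
  obtain k where k: "n = k + 5" using n by (metis add.commute le_Suc_ex)
  define N where "N = (of_nat n :: complex)"
  have Nk: "N = of_nat k + 5" by (simp add: N_def k)
  have idx: "x(k+4+2) = x(k+6)" "x(k+4+1) = x(k+5)" "x(k+3+2) = x(k+5)" "x(k+3+1) = x(k+4)"
     "x(k+2+2) = x(k+4)" "x(k+2+1) = x(k+3)" "x(k+1+2) = x(k+3)" "x(k+1+1) = x(k+2)"
    by (simp_all only: add.assoc numeral_plus_numeral semiring_norm one_plus_numeral)
  have r0: "(N+1)*(N+c)*x(k+6) - ((2*w+1)*N + c*w + a)*x(k+5) + w*(w+1)*x(k+4) = 0"
    using R[of "k+4"] unfolding idx by (simp add: Nk algebra_simps)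
  have r1: "((N-1)+1)*((N-1)+c)*x(k+5) - ((2*w+1)*(N-1) + c*w + a)*x(k+4) + w*(w+1)*x(k+3) = 0"
    using R[of "k+3"] unfolding idx by (simp add: Nk algebra_simps)
  have r2: "((N-2)+1)*((N-2)+c)*x(k+4) - ((2*w+1)*(N-2) + c*w + a)*x(k+3) + w*(w+1)*x(k+2) = 0"
    using R[of "k+2"] unfolding idx by (simp add: Nk algebra_simps)
  have r3: "((N-3)+1)*((N-3)+c)*x(k+3) - ((2*w+1)*(N-3) + c*w + a)*x(k+2) + w*(w+1)*x(k+1) = 0"
    using R[of "k+1"] unfolding idx by (simp add: Nk algebra_simps)
  have r4: "((N-4)+1)*((N-4)+c)*x(k+2) - ((2*w+1)*(N-4) + c*w + a)*x(k+1) + w*(w+1)*x(k) = 0"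
    using R[of "k"] by (simp add: Nk algebra_simps)
  note cid = core_id[where N=N and a=a and c=c and w=w and zg="x(k+6)" and zf="x(k+5)" and ze="x(k+4)" and zd="x(k+3)" and zc="x(k+2)" and zb="x(k+1)" and za="x k"]
  define P0 where "P0 = 2*(a*(c^2 - 2*c*N + c - 2*(N - 2)^2) + c*(N - 1)*(2*c + N - 5))*N*(c+N-1)"
  define P1 where "P1 = ((N - 4)*(N - 3)*(N - 2)*(N - 1)*(4*w^2 - 1) + 2*(N - 3)*(N - 2)*(N - 1)*(4*a + c*(4*w^2 - 3)) + (N - 2)*(N - 1)*(8*a^2 + a*(4*c + 6) + c*(6*(c - 2)*w^2 - 6*c + 1)) + 2*(N - 1)*(a^2*(4*c - 2) - 3*a*(c - 1)*c + (c - 2)*c*(c + 1)*w^2) + (c - 2)*(- (a^2*(c + 2)) + a*c + c^2*(c + 1)*w^2))"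
  define P2 where "P2 = (2*w^2*(c - 3)*(a*(3*c + 8) - 2*c^2 + c - 32) + 2*w^2*(N*(10*a + c*(31 - 3*c) - 104) - 6*(c - 6)*N^2 - 4*N^3) - 2*(a + N - 3)*(2*a^2 - a*(c - 2*N + 3) - (N - 2)*(2*c + N - 4)))"
  define P3 where "P3 = (- ((w^2*(-12*a^2 + 2*a*(6*c + 5) - 6*c^2 + c) + 2*(N - 3)*(a + c*(4*w^2 - 3)*w^2) + (a - 1)*a + 5*(c - 2)*c*w^4 + (N - 4)*(N - 3)*(8*w^4 - 6*w^2 + 1))))"
  define P4 where "P4 = (2*w^2*(w^2*(-6*a + 5*c + 4*(N - 4)) + 3*a - 2*c - N + 4))"
  define P5 where "P5 = (4*w^6 - 5*w^4 + w^2)"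
  have main: "(c-2)*c*N*(N+1)*(c+N-1)*(c+N) * x(k+6) = P0*x(k+5) + P1*x(k+4) + P2*x(k+3) + P3*x(k+2) + P4*x(k+1) + P5*x k"
    using cid r0 r1 r2 r3 r4 unfolding P0_def P1_def P2_def P3_def P4_def P5_def by simp
  have c0: "c \<noteq> 0" using hc by (metis add.inverse_neutral of_nat_0)
  have N0: "N \<noteq> 0" using n by (simp add: N_def)
  have N1: "N + 1 \<noteq> 0" by (metis N_def of_nat_Suc of_nat_eq_0_iff nat.distinct(1) add.commute)
  have cN: "c + N \<noteq> 0" using hc unfolding N_def by (metis add_eq_0_iff2)
  have cN1: "c + N - 1 \<noteq> 0" using hc[rule_format, of "n-1"] n unfolding N_def
    by (auto simp: of_nat_diff algebra_simps)
  have c2: "c - 2 \<noteq> 0" using hc2 by simp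
  have DnN: "Dn c n = (c-2)*c*N*(N+1)*(c+N-1)*(c+N)" by (simp add: Dn_def N_def algebra_simps)
  have D0: "Dn c n \<noteq> 0" unfolding DnN using c0 N0 N1 cN cN1 c2 by simp
  define DD where "DD = (c-2)*c*N*(N+1)*(c+N-1)*(c+N)"
  have DD0: "DD \<noteq> 0" using D0 DnN DD_def by simp
  have b0: "beta0 a c n = P0 / DD"
  proof -
    define E where "E = 2*(a*(c^2 - 2*c*N + c - 2*(N - 2)^2) + c*(N - 1)*(2*c + N - 5))"
    have n1: "E*(N*(c+N-1)) = P0" unfolding E_def P0_def by algebra
    have n2: "((c - 2) * c * (N + 1) * (c + N))*(N*(c+N-1)) = DD" unfolding DD_def by algebra
    have "beta0 a c n = E / ((c - 2) * c * (N + 1) * (c + N))"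
      unfolding beta0_def Let_def N_def[symmetric] E_def by simp
    also have "\<dots> = (E*(N*(c+N-1))) / (((c - 2) * c * (N + 1) * (c + N))*(N*(c+N-1)))"
      using N0 cN1 by simp
    finally show ?thesis unfolding n1 n2 .
  qed
  have b1: "beta1 a c w n = P1 / DD"
    unfolding beta1_def Let_def N_def[symmetric] P1_def DD_def DnN by simp
  have b2: "beta2 a c w n = P2 / DD"
    unfolding beta2_def Let_def N_def[symmetric] P2_def DD_def DnN by simp
  have b3: "beta3 a c w n = P3 / DD"
    unfolding beta3_def Let_def N_def[symmetric] P3_def DD_def DnN by (rule minus_divide_left)
  have b4: "beta4 a c w n = P4 / DD"
    unfolding beta4_def Let_def N_def[symmetric] P4_def DD_def DnN by simp
  have b5: "beta5 c w n = P5 / DD"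
    unfolding beta5_def P5_def DD_def DnN by simp
  have e: "x(n+1) = x(k+6)" "x n = x(k+5)" "x(n-1) = x(k+4)" "x(n-2) = x(k+3)" "x(n-3) = x(k+2)"
      "x(n-4) = x(k+1)" "x(n-5) = x k"
    by (simp_all add: k add.commute)
  have m2: "DD * x(k+6) = P0*x(k+5) + P1*x(k+4) + P2*x(k+3) + P3*x(k+2) + P4*x(k+1) + P5*x k"
    using main DD_def by simp
  show ?thesis unfolding e b0 b1 b2 b3 b4 b5 using m2 DD0
    by (simp add: field_simps)
qed

lemma real_aux:
  fixes A C Z n :: real
  assumes "A \<ge> 0" "C \<ge> 0" "Z \<ge> 0" "n \<ge> 2*C" "n \<ge> A" "n \<ge> 8*Z"
  shows "(A+n)*Z \<le> 1/2*((n+1)*(n-C))"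
proof -
  have n0: "n \<ge> 0" using assms by linarith
  have "(A+n)*Z \<le> (2*n)*Z" using assms by (intro mult_right_mono) auto
  also have "\<dots> \<le> n*n/4"
  proof -
    have "n*(8*Z) \<le> n*n" using assms n0 by (intro mult_left_mono) auto
    then show ?thesis by (simp add: field_simps)
  qed
  also have "\<dots> \<le> 1/2*((n+1)*(n-C))"
  proof -
    have "n/2 \<le> n - C" using assms by linarith
    moreover have "n \<le> n+1" by simp
    ultimately have "n*(n/2) \<le> (n+1)*(n-C)" using n0 by (intro mult_mono) auto
    then show ?thesis by simp
  qed
  finally show ?thesis .
qed

lemma mc_summable:
  fixes a c z :: complex
  assumes hc: "\<forall>k::nat. c \<noteq> - of_nat k"
  shows "summable (\<lambda>n. norm (mc a c n * z^n))"
proof (rule summable_ratio_test[where c="1/2" and N="nat \<lceil>2*norm c + norm a + 8*norm z\<rceil>"])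
  fix n :: nat
  assume nN: "nat \<lceil>2*norm c + norm a + 8*norm z\<rceil> \<le> n"
  then have nb: "2*norm c + norm a + 8*norm z \<le> real n" by linarith
  have key: "(norm a + real n) * norm z \<le> 1/2*((real n+1)*(real n - norm c))"
    using nb norm_ge_zero[of a] norm_ge_zero[of z] norm_ge_zero[of c] by (intro real_aux) linarith+
  have e: "(of_nat n + 1) * (of_nat n + c) * mc a c (Suc n) = (a + of_nat n) * mc a c n"
    by (rule mc_Suc[OF hc])
  have cn: "norm (of_nat n + c) \<ge> real n - norm c"
    using norm_diff_ineq[of "of_nat n" c] by simp
  have an: "norm (a + of_nat n) \<le> norm a + real n"
    using norm_triangle_ineq[of a "of_nat n"] by simp
  have n1: "norm (of_nat n + 1 :: complex) = real n + 1"
    by (metis norm_of_nat of_nat_Suc add.commute)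
  have pos: "0 < (real n + 1) * norm (of_nat n + c)"
  proof -
    have "of_nat n + c \<noteq> 0" using hc by (metis add.commute add_eq_0_iff2)
    then show ?thesis by (simp add: add_pos_nonneg)
  qed
  have E: "(real n + 1) * norm (of_nat n + c) * norm (mc a c (Suc n)) = norm (a + of_nat n) * norm (mc a c n)"
    using arg_cong[OF e, of norm] by (simp add: norm_mult n1)
  have "(real n + 1) * norm (of_nat n + c) * (norm (mc a c (Suc n)) * norm z)
        = ((real n + 1) * norm (of_nat n + c) * norm (mc a c (Suc n))) * norm z"
    by (simp only: mult.assoc)
  also have "\<dots> = norm (a + of_nat n) * norm (mc a c n) * norm z" by (simp only: E)
  also have "\<dots> = norm (a + of_nat n) * norm z * norm (mc a c n)" by (simp only: mult_ac)
  also have "\<dots> \<le> (norm a + real n) * norm z * norm (mc a c n)"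
    using an by (intro mult_right_mono) auto
  also have "\<dots> \<le> 1/2*((real n+1)*(real n - norm c)) * norm (mc a c n)"
    using key by (intro mult_right_mono) auto
  also have "\<dots> \<le> 1/2*((real n+1)* norm (of_nat n + c)) * norm (mc a c n)"
    using cn by (intro mult_right_mono mult_left_mono) auto
  finally have "(real n + 1) * norm (of_nat n + c) * (norm (mc a c (Suc n)) * norm z)
      \<le> (real n + 1) * norm (of_nat n + c) * (1/2 * norm (mc a c n))" by (simp add: algebra_simps)
  then have "norm (mc a c (Suc n)) * norm z \<le> 1/2 * norm (mc a c n)"
    by (simp only: mult_le_cancel_left_pos[OF pos])
  then have "norm (mc a c (Suc n)) * norm z \<le> 1/2 * norm (mc a c n)" .
  then show "norm (norm (mc a c (Suc n) * z ^ Suc n)) \<le> 1/2 * norm (norm (mc a c n * z ^ n))"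
  proof -
    have "(norm (mc a c (Suc n)) * norm z) * norm z ^ n \<le> (1/2 * norm (mc a c n)) * norm z ^ n"
      using \<open>norm (mc a c (Suc n)) * norm z \<le> 1/2 * norm (mc a c n)\<close> by (rule mult_right_mono) simp
    then show ?thesis by (simp add: norm_mult norm_power mult_ac)
  qed
qed simp


lemma g_sums:
  fixes a c w z :: complex
  assumes hc: "\<forall>k::nat. c \<noteq> - of_nat k"
  shows "(\<lambda>n. gs a c w n * z^n) sums (exp (w*z) * kummerM a c z)"
proof -
  define A where "A i = (w*z)^i /\<^sub>R fact i" for i
  define B where "B j = mc a c j * z^j" for j
  have sA: "summable (\<lambda>k. norm (A k))" unfolding A_def by (rule summable_norm_exp)
  have sB: "summable (\<lambda>k. norm (B k))" unfolding B_def by (rule mc_summable[OF hc])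
  have eA: "(\<Sum>k. A k) = exp (w*z)" unfolding A_def using exp_converges sums_unique by metis
  have eB: "(\<Sum>k. B k) = kummerM a c z" unfolding B_def kummerM_def mc_def by simp
  have "(\<lambda>k. \<Sum>i\<le>k. A i * B (k - i)) sums ((\<Sum>k. A k) * (\<Sum>k. B k))"
    by (rule Cauchy_product_sums[OF sA sB])
  moreover have "(\<Sum>i\<le>k. A i * B (k - i)) = gs a c w k * z^k" for k
  proof -
    have "(\<Sum>i\<le>k. A i * B (k - i)) = (\<Sum>i=0..k. (w^i / fact i * mc a c (k-i)) * z^k)"
    proof (rule sum.cong)
      fix i assume "i \<in> {0..k}"
      then have ik: "i \<le> k" by simp
      have "z^i * z^(k-i) = z^k" using ik by (simp flip: power_add)
      then show "A i * B (k - i) = (w^i / fact i * mc a c (k-i)) * z^k"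
        unfolding A_def B_def by (simp add: scaleR_conv_of_real power_mult_distrib field_simps flip: \<open>z^i * z^(k-i) = z^k\<close>)
    qed (simp add: atMost_atLeast0)
    also have "\<dots> = gs a c w k * z^k" by (simp add: gs_def sum_distrib_right)
    finally show ?thesis .
  qed
  ultimately show ?thesis using eA eB by simp
qed

lemma powser_unique:
  fixes f g :: "nat \<Rightarrow> complex"
  assumes f: "\<And>z. (\<lambda>n. f n * z^n) sums (F z)" and g: "\<And>z. (\<lambda>n. g n * z^n) sums (F z)"
  shows "f m = g m"
proof (rule ccontr)
  define d where "d n = f n - g n" for n
  have d: "(\<lambda>n. d n * z^n) sums 0" for z
    using sums_diff[OF f[of z] g[of z]] by (simp add: d_def algebra_simps)
  assume "f m \<noteq> g m"
  then have dm: "d m \<noteq> 0" by (simp add: d_def)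
  show False
  proof (cases "m = 0")
    case True
    have "d 0 = 0" using d[of 0] by simp
    then show False using dm True by simp
  next
    case False
    have ex: "\<exists>s>0. \<forall>z. z \<in> cball (0::complex) s - {0} \<longrightarrow> (0::complex) \<noteq> 0"
    proof (rule powser_0_nonzero[where a=d and r=1 and \<xi>=0 and f="\<lambda>_. 0" and m=m])
      show "\<And>x. norm (x - 0) < 1 \<Longrightarrow> (\<lambda>n. d n * (x - 0) ^ n) sums 0" using d by simp
    qed (use dm False in auto)
    then obtain s :: real where s: "s > 0" and H: "\<forall>z. z \<in> cball (0::complex) s - {0} \<longrightarrow> (0::complex) \<noteq> 0"
      by blast
    have "complex_of_real s \<in> cball 0 s - {0}" using s by simp
    with H have "(0::complex) \<noteq> 0" by blast
    then show False by simp
  qed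
qed


lemma mc_vals:
  shows "mc a c 0 = 1" "mc a c 1 = a / c" "mc a c 2 = a*(a+1)/(2*c*(c+1))"
    "mc a c 3 = a*(a+1)*(a+2)/(6*c*(c+1)*(c+2))"
    "mc a c 4 = a*(a+1)*(a+2)*(a+3)/(24*c*(c+1)*(c+2)*(c+3))"
    "mc a c 5 = a*(a+1)*(a+2)*(a+3)*(a+4)/(120*c*(c+1)*(c+2)*(c+3)*(c+4))"
  by (simp_all add: mc_def numeral_eq_Suc pochhammer_Suc fact_Suc mult_ac) (simp_all add: algebra_simps)

lemma u_vals:
  "(gs a c p 0 + gs a c (-p) 0)/2 = mc a c 0"
  "(gs a c p 1 + gs a c (-p) 1)/2 = mc a c 1"
  "(gs a c p 2 + gs a c (-p) 2)/2 = mc a c 2 + p^2/2"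
  "(gs a c p 3 + gs a c (-p) 3)/2 = mc a c 3 + p^2/2 * mc a c 1"
  "(gs a c p 4 + gs a c (-p) 4)/2 = mc a c 4 + p^2/2 * mc a c 2 + p^4/24"
  "(gs a c p 5 + gs a c (-p) 5)/2 = mc a c 5 + p^2/2 * mc a c 3 + p^4/24 * mc a c 1"
  by (simp_all add: gs_def numeral_eq_Suc fact_Suc mc_vals(1) field_simps)


lemma lin6:
  fixes X Y b0 b1 b2 b3 b4 b5 x0 x1 x2 x3 x4 x5 y0 y1 y2 y3 y4 y5 :: complex
  assumes "X = b0*x0+b1*x1+b2*x2+b3*x3+b4*x4+b5*x5" "Y = b0*y0+b1*y1+b2*y2+b3*y3+b4*y4+b5*y5"
  shows "(X+Y)/2 = b0*((x0+y0)/2)+b1*((x1+y1)/2)+b2*((x2+y2)/2)+b3*((x3+y3)/2)+b4*((x4+y4)/2)+b5*((x5+y5)/2)"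
  using assms by (simp add: field_simps)

lemma beta_neg:
  "beta1 a c (-p) n = beta1 a c p n" "beta2 a c (-p) n = beta2 a c p n" "beta3 a c (-p) n = beta3 a c p n"
  "beta4 a c (-p) n = beta4 a c p n" "beta5 c (-p) n = beta5 c p n"
  by (simp_all add: beta1_def beta2_def beta3_def beta4_def beta5_def)

theorem theorem2p10:
  fixes a c p :: complex and u :: "nat \<Rightarrow> complex"
  assumes hc: "\<forall>k::nat. c \<noteq> - of_nat k"
    and hc2: "c \<noteq> 2"
    and hu: "\<forall>z::complex. (\<lambda>n. u n * z ^ n) sums (cosh (p * z) * kummerM a c z)"
  shows "u 0 = 1 \<and>
    u 1 = a / c \<and>
    u 2 = a*(a+1) / (2*c*(c+1)) + p^2 / 2 \<and>
    u 3 = a*p^2 / (2*c) + a*(a+1)*(a+2) / (6*c*(c+1)*(c+2)) \<and>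
    u 4 = a*(a+1)*p^2 / (4*c*(c+1)) + a*(a+1)*(a+2)*(a+3) / (24*c*(c+1)*(c+2)*(c+3)) + p^4 / 24 \<and>
    u 5 = a*p^4 / (24*c) + a*(a+1)*(a+2)*p^2 / (12*c*(c+1)*(c+2))
               + a*(a+1)*(a+2)*(a+3)*(a+4) / (120*c*(c+1)*(c+2)*(c+3)*(c+4)) \<and>
    (\<forall>n\<ge>5. u (n+1) = beta0 a c n * u n + beta1 a c p n * u (n-1) + beta2 a c p n * u (n-2)
                       + beta3 a c p n * u (n-3) + beta4 a c p n * u (n-4) + beta5 c p n * u (n-5))"
proof -
  define gp where "gp = gs a c p"
  define gm where "gm = gs a c (-p)"
  have gsum: "(\<lambda>n. (gp n + gm n)/2 * z^n) sums (cosh (p*z) * kummerM a c z)" for z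
  proof -
    have "(\<lambda>n. gp n * z^n + gm n * z^n) sums (exp (p*z) * kummerM a c z + exp ((-p)*z) * kummerM a c z)"
      unfolding gp_def gm_def by (intro sums_add g_sums hc)
    then have "(\<lambda>n. (gp n * z^n + gm n * z^n)/2) sums ((exp (p*z) * kummerM a c z + exp ((-p)*z) * kummerM a c z)/2)"
      by (rule sums_divide)
    moreover have "(exp (p*z) * kummerM a c z + exp ((-p)*z) * kummerM a c z)/2 = cosh (p*z) * kummerM a c z"
      by (simp add: cosh_field_def field_simps)
    ultimately show ?thesis by (simp add: field_simps)
  qed
  have uu: "u m = (gp m + gm m)/2" for m
    by (rule powser_unique[where F="\<lambda>z. cosh (p*z) * kummerM a c z"]) (use hu gsum in auto)
  have c0: "c \<noteq> 0" using hc[rule_format, of 0] by simp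
  have c1: "c + 1 \<noteq> 0" using hc[rule_format, of 1] by (metis add_eq_0_iff2 of_nat_1)
  have c2: "c + 2 \<noteq> 0" using hc[rule_format, of 2] by (metis add_eq_0_iff2 of_nat_numeral)
  have c3: "c + 3 \<noteq> 0" using hc[rule_format, of 3] by (metis add_eq_0_iff2 of_nat_numeral)
  have c4: "c + 4 \<noteq> 0" using hc[rule_format, of 4] by (metis add_eq_0_iff2 of_nat_numeral)
  have v: "u 0 = 1" "u 1 = a / c" "u 2 = a*(a+1) / (2*c*(c+1)) + p^2 / 2"
    "u 3 = a*p^2 / (2*c) + a*(a+1)*(a+2) / (6*c*(c+1)*(c+2))"
    "u 4 = a*(a+1)*p^2 / (4*c*(c+1)) + a*(a+1)*(a+2)*(a+3) / (24*c*(c+1)*(c+2)*(c+3)) + p^4 / 24"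
    "u 5 = a*p^4 / (24*c) + a*(a+1)*(a+2)*p^2 / (12*c*(c+1)*(c+2))
               + a*(a+1)*(a+2)*(a+3)*(a+4) / (120*c*(c+1)*(c+2)*(c+3)*(c+4))"
    unfolding uu gp_def gm_def u_vals mc_vals by (simp_all add: mult_ac add_ac)
  have r: "u (n+1) = beta0 a c n * u n + beta1 a c p n * u (n-1) + beta2 a c p n * u (n-2)
                       + beta3 a c p n * u (n-3) + beta4 a c p n * u (n-4) + beta5 c p n * u (n-5)"
    if n: "n \<ge> 5" for n
  proof -
    have Rp: "gp (n+1) = beta0 a c n * gp n + beta1 a c p n * gp (n-1) + beta2 a c p n * gp (n-2)
                       + beta3 a c p n * gp (n-3) + beta4 a c p n * gp (n-4) + beta5 c p n * gp (n-5)"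
      unfolding gp_def by (rule rec6[OF rec_g[OF hc] hc hc2 n])
    have Rm: "gm (n+1) = beta0 a c n * gm n + beta1 a c p n * gm (n-1) + beta2 a c p n * gm (n-2)
                       + beta3 a c p n * gm (n-3) + beta4 a c p n * gm (n-4) + beta5 c p n * gm (n-5)"
      using rec6[OF rec_g[OF hc] hc hc2 n, of a "-p"] unfolding gm_def beta_neg .
    show ?thesis unfolding uu by (rule lin6[OF Rp Rm])
  qed
  show ?thesis using v r by blast
qed


end
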